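(* Let $\sigma\in\operatorname{Hom}(\pi_1(M),\mathrm{SU}(2))$, let $(x,y,z)=(\operatorname{tr}\sigma(X),\operatorname{tr}\sigma(Y),\operatorname{tr}\sigma(XY))$ and $k=\operatorname{tr}\sigma(K)$. Then $[\sigma]$ is a $\mathrm{Pin}(2)$ representation class but not a $\mathrm{Spin}(2)$ representation class if and only if $k\ne 2$ and at least two of $x,y,z$ are zero.
   Context: $M$ is a torus with one boundary component; $\pi_1(M)$ is the free group on $X,Y$ and $K=XYX^{-1}Y^{-1}$. One has $k=x^2+y^2+z^2-xyz-2$. Use the quaternionic model of $\mathrm{SU}(2)$: $1,\mathrm{i},\mathrm{j},\mathrm{k}$ denote the matrices $\begin{pmatrix}1&0\\0&1\end{pmatrix},\begin{pmatrix}i&0\\0&-i\end{pmatrix},\begin{pmatrix}0&1\\-1&0\end{pmatrix},\begin{pmatrix}0&i\\i&0\end{pmatrix}$. Set $\mathrm{Spin}(2)=\{\cos\theta+\sin\theta\,\mathrm{j}\}$, $\mathrm{Spin}_-(2)=\{\cos\theta\,\mathrm{k}+\sin\theta\,\mathrm{i}\}$, $\mathrm{Pin}(2)=\mathrm{Spin}(2)\cup\mathrm{Spin}_-(2)$ (the preimage of $\mathrm{O}(2)$ under $\mathrm{SU}(2)\to\mathrm{SO}(3)$). For a subgroup $G\subset\mathrm{SU}(2)$, a class $[\sigma]\in E=\operatorname{Hom}(\pi_1(M),\mathrm{SU}(2))/\mathrm{SU}(2)$ is a $G$ representation class if some representative of $[\sigma]$ takes values in $G$ (equivalently $\sigma(\pi_1(M))$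 lies in a conjugate of $G$). Classes are determined by their trace coordinates $(x,y,z)$. *)

theory Defs
  imports "HOL-Analysis.Analysis"
begin

type_synonym cmat2 = "complex^2^2"

definition mat2 :: "complex \<Rightarrow> complex \<Rightarrow> complex \<Rightarrow> complex \<Rightarrow> cmat2" where
  "mat2 a b c d = (\<chi> i j. if i = 1 then (if j = 1 then a else b) else (if j = 1 then c else d))"

definition ctrans :: "cmat2 \<Rightarrow> cmat2" where
  "ctrans A = (\<chi> i j. cnj (A $ j $ i))"

definition SU2 :: "cmat2 set" where
  "SU2 = {A. A ** ctrans A = mat 1 \<and> det A = 1}"

definition q1 :: cmat2 where "q1 = mat2 1 0 0 1"
definition qi :: cmat2 where "qi = mat2 \<i> 0 0 (- \<i>)"
definition qj :: cmat2 where "qj = mat2 0 1 (-1) 0"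
definition qk :: cmat2 where "qk = mat2 0 \<i> \<i> 0"

definition Spin2 :: "cmat2 set" where
  "Spin2 = {cos t *\<^sub>R q1 + sin t *\<^sub>R qj | t. True}"
definition Spin2_minus :: "cmat2 set" where
  "Spin2_minus = {cos t *\<^sub>R qk + sin t *\<^sub>R qi | t. True}"
definition Pin2 :: "cmat2 set" where
  "Pin2 = Spin2 \<union> Spin2_minus"

text \<open>A homomorphism from the free group on X, Y to SU(2) is determined by
  the pair (A,B) = (sigma(X), sigma(Y)). Its image sigma(pi_1(M)) is the subgroup
  generated by A and B, described here as all values of words in X, Y.\<close>
inductive_set rep_image :: "cmat2 \<Rightarrow> cmat2 \<Rightarrow> cmat2 set" for A B where
  one: "mat 1 \<in> rep_image A B"
| genX: "A \<in> rep_image A B"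
| genY: "B \<in> rep_image A B"
| mult: "u \<in> rep_image A B \<Longrightarrow> v \<in> rep_image A B \<Longrightarrow> u ** v \<in> rep_image A B"
| inv: "u \<in> rep_image A B \<Longrightarrow> matrix_inv u \<in> rep_image A B"

definition is_G_class :: "cmat2 set \<Rightarrow> cmat2 \<Rightarrow> cmat2 \<Rightarrow> bool" where
  "is_G_class G A B \<longleftrightarrow>
     (\<exists>g\<in>SU2. \<forall>u\<in>rep_image A B. g ** u ** matrix_inv g \<in> G)"

end

theory Submission
  imports Defs
begin

definition Q :: "real \<Rightarrow> real \<Rightarrow> real \<Rightarrow> real \<Rightarrow> cmat2" where
  "Q a b c d = mat2 (Complex a b) (Complex c d) (Complex (-c) d) (Complex a (-b))"

lemma Q_nth: "Q a b c d $ 1 $ 1 = Complex a b" "Q a b c d $ 1 $ 2 = Complex c d"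
  "Q a b c d $ 2 $ 1 = Complex (-c) d" "Q a b c d $ 2 $ 2 = Complex a (-b)"
  by (simp_all add: Q_def mat2_def)

lemma cmat2_eq: "(M::cmat2) = N \<longleftrightarrow> M$1$1 = N$1$1 \<and> M$1$2 = N$1$2 \<and> M$2$1 = N$2$1 \<and> M$2$2 = N$2$2"
  by (auto simp: vec_eq_iff forall_2)

lemma Q_mult: "Q a1 b1 c1 d1 ** Q a2 b2 c2 d2 =
  Q (a1*a2 - b1*b2 - c1*c2 - d1*d2) (a1*b2 + b1*a2 + c1*d2 - d1*c2)
    (a1*c2 - b1*d2 + c1*a2 + d1*b2) (a1*d2 + b1*c2 - c1*b2 + d1*a2)"
  by (simp add: cmat2_eq matrix_matrix_mult_def sum_2 Q_nth complex_eq_iff algebra_simps)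

lemma Q_eq: "Q a b c d = Q a' b' c' d' \<longleftrightarrow> a = a' \<and> b = b' \<and> c = c' \<and> d = d'"
  by (auto simp: cmat2_eq Q_nth)

lemma Q_one: "mat 1 = Q 1 0 0 0"
  by (simp add: cmat2_eq Q_nth mat_def complex_eq_iff)

lemma trace_Q: "trace (Q a b c d) = of_real (2*a)"
  by (simp add: trace_def sum_2 Q_nth complex_eq_iff)

lemma ctrans_Q: "ctrans (Q a b c d) = Q a (-b) (-c) (-d)"
  by (simp add: cmat2_eq ctrans_def Q_nth complex_eq_iff)

lemma det_Q: "det (Q a b c d) = of_real (a^2+b^2+c^2+d^2)"
  by (simp add: det_2 Q_nth complex_eq_iff power2_eq_square)

lemma matrix_inv_eq: assumes "(M::cmat2) ** N = mat 1" "N ** M = mat 1" shows "matrix_inv M = N"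
proof -
  have "\<exists>N'. M ** N' = mat 1 \<and> N' ** M = mat 1" using assms by blast
  then have h: "M ** matrix_inv M = mat 1 \<and> matrix_inv M ** M = mat 1"
    unfolding matrix_inv_def by (rule someI_ex)
  have "matrix_inv M = matrix_inv M ** (M ** N)" using assms by simp
  also have "\<dots> = N" using h by (simp add: matrix_mul_assoc)
  finally show ?thesis .
qed

lemma inv_Q: "a^2+b^2+c^2+d^2 = 1 \<Longrightarrow> matrix_inv (Q a b c d) = Q a (-b) (-c) (-d)"
  by (rule matrix_inv_eq) (simp_all add: Q_mult Q_one Q_eq power2_eq_square algebra_simps)

lemma Q_SU2: "Q a b c d \<in> SU2 \<longleftrightarrow> a^2+b^2+c^2+d^2 = 1"
proof
  assume "Q a b c d \<in> SU2"
  then have "complex_of_real (a^2+b^2+c^2+d^2) = 1" by (simp only: SU2_def det_Q mem_Collect_eq)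
  then show "a^2+b^2+c^2+d^2 = 1" by (metis of_real_eq_1_iff)
next
  assume h: "a^2+b^2+c^2+d^2 = 1"
  then show "Q a b c d \<in> SU2"
    by (simp add: SU2_def det_Q ctrans_Q Q_mult Q_one Q_eq power2_eq_square algebra_simps)
qed

lemma SU2_Q: assumes "M \<in> SU2" obtains a b c d where "M = Q a b c d" "a^2+b^2+c^2+d^2 = 1"
proof -
  define a where "a = M$1$1" define b where "b = M$1$2"
  define c where "c = M$2$1" define d where "d = M$2$2"
  have u: "M ** ctrans M = mat 1" and dt: "det M = 1" using assms by (auto simp: SU2_def)
  have e1: "a * cnj a + b * cnj b = 1"
    using arg_cong[OF u, of "\<lambda>X. X$1$1"] by (simp add: matrix_matrix_mult_def sum_2 ctrans_def mat_def a_def b_def)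
  have e2: "cnj a * c + cnj b * d = 0"
    using arg_cong[OF u, of "\<lambda>X. X$2$1"] by (simp add: matrix_matrix_mult_def sum_2 ctrans_def mat_def a_def b_def c_def d_def mult.commute)
  have e3: "a*d - b*c = 1" using dt by (simp add: det_2 a_def b_def c_def d_def)
  have "d - cnj a = -d*(a*cnj a + b*cnj b - 1) + cnj a*(a*d - b*c - 1) + b*(cnj a*c + cnj b*d)"
    by (simp add: algebra_simps)
  then have dd: "d = cnj a" using e1 e2 e3 by simp
  have "c + cnj b = -c*(a*cnj a + b*cnj b - 1) - cnj b*(a*d - b*c - 1) + a*(cnj a*c + cnj b*d)"
    by (simp add: algebra_simps)
  then have cc: "c = - cnj b" using e1 e2 e3 by (simp add: add_eq_0_iff)
  have "M = Q (Re a) (Im a) (Re b) (Im b)"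
    using dd cc by (simp add: cmat2_eq Q_nth a_def b_def c_def d_def complex_eq_iff)
  moreover have "(Re a)^2 + (Im a)^2 + (Re b)^2 + (Im b)^2 = 1"
    using arg_cong[OF e1, of Re] by (simp add: power2_eq_square)
  ultimately show ?thesis using that by blast
qed


lemma rot_pure:
  fixes m1 m2 m3 p1 p2 p3 :: real
  assumes m: "m1^2+m2^2+m3^2 = 1" and pos: "1 + m2 > 0"
    and perp: "p1*m1 + p2*m2 + p3*m3 = 0"
  defines "s \<equiv> sqrt (2*(1+m2))"
  defines "g \<equiv> Q ((1+m2)/s) (-m3/s) 0 (m1/s)"
  shows "g \<in> SU2" "\<exists>b d. g ** Q 0 p1 p2 p3 ** matrix_inv g = Q 0 b 0 d"
proof -
  have s2: "s^2 = 2*(1+m2)" using pos by (simp add: s_def)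
  have sne: "s \<noteq> 0" using pos by (simp add: s_def)
  define u0 where "u0 = (1+m2)/s"
  define u1 where "u1 = -m3/s"
  define u3 where "u3 = m1/s"
  have hu0: "u0 * s = 1 + m2" and hu1: "u1 * s = -m3" and hu3: "u3 * s = m1"
    using sne by (simp_all add: u0_def u1_def u3_def)
  have nu: "u0^2 + u1^2 + 0^2 + u3^2 = 1"
  proof -
    have "(u0^2 + u1^2 + u3^2) * s^2 = (u0 * s)^2 + (u1 * s)^2 + (u3 * s)^2" by algebra
    also have "\<dots> = s^2" unfolding hu0 hu1 hu3 s2 using m by algebra
    finally show ?thesis using sne by simp
  qed
  have gdef: "g = Q u0 u1 0 u3" by (simp add: g_def u0_def u1_def u3_def)
  show "g \<in> SU2" unfolding gdef Q_SU2 using nu .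
  have ig: "matrix_inv g = Q u0 (-u1) 0 (-u3)" unfolding gdef using inv_Q[OF nu] by simp
  show "\<exists>b d. g ** Q 0 p1 p2 p3 ** matrix_inv g = Q 0 b 0 d"
    unfolding ig unfolding gdef
    apply (simp add: Q_mult Q_eq)
    using m perp hu0 hu1 hu3 sne by algebra
qed

lemma Spin2_Q: "M \<in> Spin2 \<longleftrightarrow> (\<exists>a c. M = Q a 0 c 0 \<and> a^2 + c^2 = 1)"
proof -
  have e: "cos t *\<^sub>R q1 + sin t *\<^sub>R qj = Q (cos t) 0 (sin t) 0" for t
    by (simp add: cmat2_eq Q_nth q1_def qj_def mat2_def complex_eq_iff)
  show ?thesis
  proof
    assume "M \<in> Spin2" then obtain t where "M = cos t *\<^sub>R q1 + sin t *\<^sub>R qj"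
      by (auto simp: Spin2_def)
    then show "\<exists>a c. M = Q a 0 c 0 \<and> a^2 + c^2 = 1" using e
      by (simp add: Q_eq sin_cos_squared_add2)
  next
    assume "\<exists>a c. M = Q a 0 c 0 \<and> a^2 + c^2 = 1"
    then obtain a c where M: "M = Q a 0 c 0" and n: "a^2 + c^2 = 1" by blast
    obtain t where "a = cos t" "c = sin t" using sincos_total_2pi[OF n] by metis
    then show "M \<in> Spin2" unfolding Spin2_def using M e by auto
  qed
qed

lemma Sm_Q: "M \<in> Spin2_minus \<longleftrightarrow> (\<exists>b d. M = Q 0 b 0 d \<and> b^2 + d^2 = 1)"
proof -
  have e: "cos t *\<^sub>R qk + sin t *\<^sub>R qi = Q 0 (sin t) 0 (cos t)" for t
    by (simp add: cmat2_eq Q_nth qk_def qi_def mat2_def complex_eq_iff)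
  show ?thesis
  proof
    assume "M \<in> Spin2_minus" then obtain t where "M = cos t *\<^sub>R qk + sin t *\<^sub>R qi"
      by (auto simp: Spin2_minus_def)
    then show "\<exists>b d. M = Q 0 b 0 d \<and> b^2 + d^2 = 1" using e
      by (simp add: Q_eq sin_cos_squared_add)
  next
    assume "\<exists>b d. M = Q 0 b 0 d \<and> b^2 + d^2 = 1"
    then obtain b d where M: "M = Q 0 b 0 d" and n: "b^2 + d^2 = 1" by blast
    have n': "d^2 + b^2 = 1" using n by simp
    obtain t where "d = cos t" "b = sin t" using sincos_total_2pi[OF n'] by metis
    then show "M \<in> Spin2_minus" unfolding Spin2_minus_def using M e by auto
  qed
qed

lemma SU2_mult: assumes "M \<in> SU2" "N \<in> SU2" shows "M ** N \<in> SU2"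
proof -
  obtain a b c d where M: "M = Q a b c d" "a^2+b^2+c^2+d^2 = 1" using SU2_Q[OF assms(1)] by metis
  obtain a' b' c' d' where N: "N = Q a' b' c' d'" "a'^2+b'^2+c'^2+d'^2 = 1" using SU2_Q[OF assms(2)] by metis
  show ?thesis unfolding M N Q_mult Q_SU2 using M(2) N(2) by algebra
qed

lemma SU2_inv: assumes "M \<in> SU2"
  shows "matrix_inv M \<in> SU2" "M ** matrix_inv M = mat 1" "matrix_inv M ** M = mat 1"
proof -
  obtain a b c d where M: "M = Q a b c d" and n: "a^2+b^2+c^2+d^2 = 1" using SU2_Q[OF assms(1)] by metis
  show "matrix_inv M \<in> SU2" "M ** matrix_inv M = mat 1" "matrix_inv M ** M = mat 1"
    unfolding M inv_Q[OF n] using n by (simp_all add: Q_SU2 Q_mult Q_one Q_eq algebra_simps power2_eq_square)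
qed

lemma one_SU2: "mat 1 \<in> SU2" unfolding Q_one Q_SU2 by simp

definition cj :: "cmat2 \<Rightarrow> cmat2 \<Rightarrow> cmat2" where "cj g u = g ** u ** matrix_inv g"

lemma cj_mult: "g \<in> SU2 \<Longrightarrow> cj g (u ** v) = cj g u ** cj g v"
  unfolding cj_def
  by (metis SU2_inv(3) matrix_mul_assoc matrix_mul_lid)

lemma cj_one: "g \<in> SU2 \<Longrightarrow> cj g (mat 1) = mat 1"
  unfolding cj_def by (simp add: SU2_inv(2))

lemma cj_SU2: "g \<in> SU2 \<Longrightarrow> u \<in> SU2 \<Longrightarrow> cj g u \<in> SU2"
  unfolding cj_def by (simp add: SU2_mult SU2_inv)

lemma cj_inv: assumes "g \<in> SU2" "u \<in> SU2" shows "matrix_inv (cj g u) = cj g (matrix_inv u)"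
  apply (rule matrix_inv_eq)
   apply (simp_all only: cj_mult[OF assms(1), symmetric] SU2_inv[OF assms(2)] cj_one[OF assms(1)])
  done

lemma inv_mult: assumes "g \<in> SU2" "h \<in> SU2" shows "matrix_inv (h ** g) = matrix_inv g ** matrix_inv h"
  apply (rule matrix_inv_eq)
  using SU2_inv[OF assms(1)] SU2_inv[OF assms(2)]
   apply (metis matrix_mul_assoc matrix_mul_lid)+
  done

lemma cj_comp: assumes "g \<in> SU2" "h \<in> SU2" shows "cj (h ** g) u = cj h (cj g u)"
  unfolding cj_def inv_mult[OF assms] by (simp add: matrix_mul_assoc)

lemma trace_cj: assumes "g \<in> SU2" shows "trace (cj g u) = trace u"
  unfolding cj_def
  by (metis SU2_inv(3)[OF assms] matrix_mul_assoc matrix_mul_rid trace_mul_sym)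

lemma cj_cancel: assumes "g \<in> SU2" "cj g u = cj g v" shows "u = v"
proof -
  have "matrix_inv g ** cj g u ** g = u" unfolding cj_def using SU2_inv[OF assms(1)]
    by (metis matrix_mul_assoc matrix_mul_lid matrix_mul_rid)
  moreover have "matrix_inv g ** cj g v ** g = v" unfolding cj_def using SU2_inv[OF assms(1)]
    by (metis matrix_mul_assoc matrix_mul_lid matrix_mul_rid)
  ultimately show ?thesis using assms(2) by metis
qed

lemma rep_SU2: "u \<in> rep_image A B \<Longrightarrow> A \<in> SU2 \<Longrightarrow> B \<in> SU2 \<Longrightarrow> u \<in> SU2"
  by (induction rule: rep_image.induct) (auto simp: one_SU2 SU2_mult SU2_inv)

lemma class_intro:
  assumes g: "g \<in> SU2" and AB: "A \<in> SU2" "B \<in> SU2"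
    and G1: "mat 1 \<in> G" and Gm: "\<And>u v. u \<in> G \<Longrightarrow> v \<in> G \<Longrightarrow> u ** v \<in> G"
    and Gi: "\<And>u. u \<in> G \<Longrightarrow> u \<in> SU2 \<Longrightarrow> matrix_inv u \<in> G"
    and hA: "cj g A \<in> G" and hB: "cj g B \<in> G"
  shows "is_G_class G A B"
proof -
  have "u \<in> rep_image A B \<Longrightarrow> cj g u \<in> G" for u
  proof (induction rule: rep_image.induct)
    case one then show ?case using cj_one[OF g] G1 by simp
  next
    case genX then show ?case using hA .
  next
    case genY then show ?case using hB .
  next
    case (mult u v) then show ?case using cj_mult[OF g] Gm by simp
  next
    case (inv u)
    have "u \<in> SU2" using rep_SU2[OF inv(1) AB] .
    then show ?case using cj_inv[OF g] Gi inv(2) cj_SU2[OF g] by metis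
  qed
  then show ?thesis unfolding is_G_class_def cj_def[symmetric] using g by blast
qed

lemma Spin2_closed: "mat 1 \<in> Spin2" "u \<in> Spin2 \<Longrightarrow> v \<in> Spin2 \<Longrightarrow> u ** v \<in> Spin2"
  "u \<in> Spin2 \<Longrightarrow> matrix_inv u \<in> Spin2" "u \<in> Spin2 \<Longrightarrow> u \<in> SU2"
proof -
  show "mat 1 \<in> Spin2" unfolding Spin2_Q Q_one by (simp add: Q_eq)
next
  assume "u \<in> Spin2" "v \<in> Spin2"
  then obtain a c a' c' where uv: "u = Q a 0 c 0" "a^2+c^2=1" "v = Q a' 0 c' 0" "a'^2+c'^2=1"
    unfolding Spin2_Q by blast
  have "(a * a' - c * c')^2 + (a * c' + c * a')^2 = 1" using uv(2,4) by algebra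
  then show "u ** v \<in> Spin2" unfolding Spin2_Q uv(1,3) Q_mult Q_eq by simp
next
  assume "u \<in> Spin2"
  then obtain a c where u: "u = Q a 0 c 0" and n: "a^2+c^2=1" unfolding Spin2_Q by blast
  then have n': "a^2+0^2+c^2+0^2=1" by simp
  show "matrix_inv u \<in> Spin2" unfolding u inv_Q[OF n'] Spin2_Q Q_eq using n by simp
  show "u \<in> SU2" unfolding u Q_SU2 using n by simp
qed

lemma Pin2_Q: "M \<in> Pin2 \<longleftrightarrow> (\<exists>a b c d. M = Q a b c d \<and> a^2+b^2+c^2+d^2 = 1 \<and> ((b = 0 \<and> d = 0) \<or> (a = 0 \<and> c = 0)))"
  unfolding Pin2_def Un_iff Spin2_Q Sm_Q by fastforce

lemma Pin2_closed: "mat 1 \<in> Pin2" "u \<in> Pin2 \<Longrightarrow> v \<in> Pin2 \<Longrightarrow> u ** v \<in> Pin2"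
  "u \<in> Pin2 \<Longrightarrow> matrix_inv u \<in> Pin2" "u \<in> Pin2 \<Longrightarrow> u \<in> SU2"
proof -
  show "mat 1 \<in> Pin2" unfolding Pin2_Q Q_one by (simp add: Q_eq)
next
  assume "u \<in> Pin2" "v \<in> Pin2"
  then obtain a b c d a' b' c' d' where u: "u = Q a b c d" "a^2+b^2+c^2+d^2 = 1" "((b = 0 \<and> d = 0) \<or> (a = 0 \<and> c = 0))"
     and v: "v = Q a' b' c' d'" "a'^2+b'^2+c'^2+d'^2 = 1" "((b' = 0 \<and> d' = 0) \<or> (a' = 0 \<and> c' = 0))"
    unfolding Pin2_Q by blast
  have "u ** v \<in> SU2" using u v by (simp add: SU2_mult Q_SU2)
  then show "u ** v \<in> Pin2" unfolding Pin2_Q u(1) v(1) Q_mult Q_SU2 Q_eq using u(3) v(3)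
    by auto
next
  assume "u \<in> Pin2"
  then obtain a b c d where u: "u = Q a b c d" "a^2+b^2+c^2+d^2 = 1" "((b = 0 \<and> d = 0) \<or> (a = 0 \<and> c = 0))"
    unfolding Pin2_Q by blast
  show "matrix_inv u \<in> Pin2" unfolding u(1) inv_Q[OF u(2)] Pin2_Q Q_eq using u(2,3) by auto
  show "u \<in> SU2" unfolding u Q_SU2 using u by simp
qed

lemma comm_k: assumes "A \<in> SU2" "B \<in> SU2" "A ** B = B ** A"
  shows "trace (A ** B ** matrix_inv A ** matrix_inv B) = 2"
proof -
  have "A ** B ** matrix_inv A ** matrix_inv B = B ** (A ** matrix_inv A) ** matrix_inv B"
    using assms(3) by (simp add: matrix_mul_assoc)
  also have "\<dots> = mat 1" using SU2_inv[OF assms(1)] SU2_inv[OF assms(2)] by simp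
  finally show ?thesis by (simp add: trace_I)
qed


lemma trace_Q0: "trace (Q a b c d) = 0 \<longleftrightarrow> a = 0"
  by (simp add: trace_Q)

lemma trace_Q2: "trace (Q a b c d) = 2 \<longleftrightarrow> a = 1"
proof -
  have "trace (Q a b c d) = 2 \<longleftrightarrow> complex_of_real (2*a) = complex_of_real 2"
    by (simp add: trace_Q)
  also have "\<dots> \<longleftrightarrow> a = 1" by (simp only: of_real_eq_iff) simp
  finally show ?thesis .
qed

lemma unit_perp:
  fixes n1 n2 n3 :: real
  assumes "n1^2+n2^2+n3^2 \<noteq> 0"
  obtains m1 m2 m3 where "m1^2+m2^2+m3^2 = 1" "1 + m2 > 0"
    "\<And>p1 p2 p3. p1*n1+p2*n2+p3*n3 = 0 \<Longrightarrow> p1*m1+p2*m2+p3*m3 = 0"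
proof -
  define N where "N = n1^2+n2^2+n3^2"
  have Npos: "N > 0" using assms unfolding N_def
    by (metis add_nonneg_nonneg order_le_less zero_le_power2)
  define r where "r = sqrt N"
  have r2: "r^2 = N" and rpos: "r > 0" using Npos by (simp_all add: r_def)
  define e :: real where "e = (if n2 \<ge> 0 then 1 else -1)"
  have e2: "e^2 = 1" by (simp add: e_def)
  have en2: "e * n2 \<ge> 0" by (simp add: e_def)
  define m1 where "m1 = e*n1/r"
  define m2 where "m2 = e*n2/r"
  define m3 where "m3 = e*n3/r"
  have "m1^2+m2^2+m3^2 = e^2 * N / r^2"
    by (simp add: m1_def m2_def m3_def N_def power_divide power_mult_distrib add_divide_distrib algebra_simps)
  also have "\<dots> = 1" using e2 r2 Npos by simp
  finally have mu: "m1^2+m2^2+m3^2 = 1" .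
  have "m2 \<ge> 0" unfolding m2_def using en2 rpos by simp
  then have mp: "1 + m2 > 0" by simp
  have "p1*m1+p2*m2+p3*m3 = 0" if "p1*n1+p2*n2+p3*n3 = 0" for p1 p2 p3
  proof -
    have "p1*m1+p2*m2+p3*m3 = e/r * (p1*n1+p2*n2+p3*n3)"
      by (simp add: m1_def m2_def m3_def algebra_simps)
    then show ?thesis using that by simp
  qed
  then show ?thesis using that mu mp by blast
qed

lemma rot_pair:
  assumes P: "P \<in> SU2" "trace P = 0" and C: "C \<in> SU2" "trace C = 0" and nc: "P ** C \<noteq> C ** P"
  shows "\<exists>g\<in>SU2. cj g P \<in> Spin2_minus \<and> cj g C \<in> Spin2_minus"
proof -
  obtain a p1 p2 p3 where Pq: "P = Q a p1 p2 p3" "a^2+p1^2+p2^2+p3^2 = 1" using SU2_Q[OF P(1)] by metis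
  obtain a' c1 c2 c3 where Cq: "C = Q a' c1 c2 c3" "a'^2+c1^2+c2^2+c3^2 = 1" using SU2_Q[OF C(1)] by metis
  have a0: "a = 0" using P(2) Pq trace_Q0 by simp
  have a'0: "a' = 0" using C(2) Cq trace_Q0 by simp
  define n1 where "n1 = p2*c3 - p3*c2"
  define n2 where "n2 = p3*c1 - p1*c3"
  define n3 where "n3 = p1*c2 - p2*c1"
  have Nne: "n1^2+n2^2+n3^2 \<noteq> 0"
  proof
    assume "n1^2+n2^2+n3^2 = 0"
    then have "n1^2 = 0" "n2^2 = 0" "n3^2 = 0" by (smt (verit) zero_le_power2)+
    then have "n1 = 0" "n2 = 0" "n3 = 0" by simp_all
    then have "P ** C = C ** P" unfolding Pq(1) Cq(1) a0 a'0 Q_mult Q_eq n1_def n2_def n3_def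
      by (simp add: algebra_simps)
    then show False using nc by simp
  qed
  obtain m1 m2 m3 where mu: "m1^2+m2^2+m3^2 = 1" and mp: "1 + m2 > 0"
    and perp: "\<And>p1 p2 p3. p1*n1+p2*n2+p3*n3 = 0 \<Longrightarrow> p1*m1+p2*m2+p3*m3 = 0"
    using unit_perp[OF Nne] by metis
  have pp: "p1*m1+p2*m2+p3*m3 = 0" by (rule perp) (simp add: n1_def n2_def n3_def algebra_simps)
  have cp: "c1*m1+c2*m2+c3*m3 = 0" by (rule perp) (simp add: n1_def n2_def n3_def algebra_simps)
  define g where "g = Q ((1+m2)/sqrt (2*(1+m2))) (-m3/sqrt (2*(1+m2))) 0 (m1/sqrt (2*(1+m2)))"
  have g: "g \<in> SU2" unfolding g_def by (rule rot_pure(1)[OF mu mp pp])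
  obtain b d where bd: "cj g P = Q 0 b 0 d"
    using rot_pure(2)[OF mu mp pp] unfolding cj_def g_def Pq(1) a0 by blast
  obtain b' d' where bd': "cj g C = Q 0 b' 0 d'"
    using rot_pure(2)[OF mu mp cp] unfolding cj_def g_def Cq(1) a'0 by blast
  have "cj g P \<in> SU2" "cj g C \<in> SU2" using cj_SU2[OF g] P C by auto
  then have "b^2+d^2 = 1" "b'^2+d'^2 = 1" unfolding bd bd' Q_SU2 by simp_all
  then have "cj g P \<in> Spin2_minus" "cj g C \<in> Spin2_minus" unfolding bd bd' Sm_Q Q_eq by auto
  then show ?thesis using g by blast
qed

lemma hj:
  fixes b d :: real
  assumes n: "b^2+d^2 = 1"
  shows "\<exists>h\<in>SU2. \<forall>a s. cj h (Q a (s*b) 0 (s*d)) = Q a 0 s 0"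
proof -
  define r where "r = sqrt (2::real)"
  have r2: "r^2 = 2" and rne: "r \<noteq> 0" by (simp_all add: r_def)
  define u0 where "u0 = 1/r"
  define u1 where "u1 = -d/r"
  define u3 where "u3 = b/r"
  have hu0: "u0 * r = 1" and hu1: "u1 * r = -d" and hu3: "u3 * r = b"
    using rne by (simp_all add: u0_def u1_def u3_def)
  have nu: "u0^2 + u1^2 + 0^2 + u3^2 = 1"
  proof -
    have "(u0^2 + u1^2 + u3^2) * r^2 = (u0 * r)^2 + (u1 * r)^2 + (u3 * r)^2" by algebra
    also have "\<dots> = r^2" unfolding hu0 hu1 hu3 r2 power2_minus one_power2 using n by linarith
    finally show ?thesis using rne by simp
  qed
  have "Q u0 u1 0 u3 \<in> SU2" unfolding Q_SU2 using nu .
  moreover have "cj (Q u0 u1 0 u3) (Q a (s*b) 0 (s*d)) = Q a 0 s 0" for a s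
    unfolding cj_def inv_Q[OF nu]
    apply (simp add: Q_mult Q_eq)
    using n hu0 hu1 hu3 rne r2 by algebra
  ultimately show ?thesis by blast
qed


lemma Spin2_in: "Q a b c d \<in> Spin2 \<longleftrightarrow> b = 0 \<and> d = 0 \<and> a^2 + c^2 = 1"
  unfolding Spin2_Q Q_eq by auto

lemma pin_cases:
  assumes A: "A' \<in> Pin2" and B: "B' \<in> Pin2" and nb: "\<not> (A' \<in> Spin2 \<and> B' \<in> Spin2)"
  shows "(trace A' = 0 \<and> trace B' = 0) \<or> (trace A' = 0 \<and> trace (A' ** B') = 0)
          \<or> (trace B' = 0 \<and> trace (A' ** B') = 0)"
    and "trace (A' ** B' ** matrix_inv A' ** matrix_inv B') = 2 \<Longrightarrow>
         \<exists>h\<in>SU2. cj h A' \<in> Spin2 \<and> cj h B' \<in> Spin2"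
proof -
  have cases: "(A' \<in> Spin2_minus \<and> B' \<in> Spin2) \<or> (A' \<in> Spin2 \<and> B' \<in> Spin2_minus)
     \<or> (A' \<in> Spin2_minus \<and> B' \<in> Spin2_minus)"
    using A B nb unfolding Pin2_def by blast
  have "((trace A' = 0 \<and> trace B' = 0) \<or> (trace A' = 0 \<and> trace (A' ** B') = 0)
          \<or> (trace B' = 0 \<and> trace (A' ** B') = 0)) \<and>
        (trace (A' ** B' ** matrix_inv A' ** matrix_inv B') = 2 \<longrightarrow>
         (\<exists>h\<in>SU2. cj h A' \<in> Spin2 \<and> cj h B' \<in> Spin2))"
    using cases
  proof (elim disjE conjE)
    assume "A' \<in> Spin2_minus" "B' \<in> Spin2"
    then obtain b d a c where Aq: "A' = Q 0 b 0 d" "b^2+d^2 = 1" and Bq: "B' = Q a 0 c 0" "a^2+c^2=1"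
      unfolding Sm_Q Spin2_Q by blast
    have iA: "matrix_inv (Q 0 b 0 d) = Q 0 (-b) 0 (-d)" using inv_Q[of 0 b 0 d] Aq by simp
    have iB: "matrix_inv (Q a 0 c 0) = Q a 0 (-c) 0" using inv_Q[of a 0 c 0] Bq by simp
    have t1: "trace A' = 0 \<and> trace (A' ** B') = 0" unfolding Aq(1) Bq(1) Q_mult trace_Q0 by simp
    have t2: "\<exists>h\<in>SU2. cj h A' \<in> Spin2 \<and> cj h B' \<in> Spin2"
      if k: "trace (A' ** B' ** matrix_inv A' ** matrix_inv B') = 2"
    proof -
      have "(a*a - c*c)*(b*b+d*d) = 1" (is "?P = 1")
        using k Aq(2) Bq(2) unfolding Aq(1) Bq(1) iA iB Q_mult trace_Q2 by algebra
      then have "c^2 = 0" using Aq(2) Bq(2) by algebra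
      then have c0: "c = 0" by simp
      then have a2: "a^2 = 1" using Bq(2) by simp
      obtain h where h: "h \<in> SU2" "\<forall>a s. cj h (Q a (s*b) 0 (s*d)) = Q a 0 s 0" using hj[OF Aq(2)] by blast
      have "cj h A' = Q 0 0 1 0" using h(2)[rule_format, of 0 1] Aq(1) by simp
      moreover have "cj h B' = Q a 0 0 0" using h(2)[rule_format, of a 0] Bq(1) c0 by simp
      ultimately have "cj h A' \<in> Spin2" "cj h B' \<in> Spin2" using a2 by (simp_all add: Spin2_in)
      then show ?thesis using h(1) by blast
    qed
    show ?thesis using t1 t2 by blast
  next
    assume "A' \<in> Spin2" "B' \<in> Spin2_minus"
    then obtain b d a c where Bq: "B' = Q 0 b 0 d" "b^2+d^2 = 1" and Aq: "A' = Q a 0 c 0" "a^2+c^2=1"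
      unfolding Sm_Q Spin2_Q by blast
    have iB: "matrix_inv (Q 0 b 0 d) = Q 0 (-b) 0 (-d)" using inv_Q[of 0 b 0 d] Bq by simp
    have iA: "matrix_inv (Q a 0 c 0) = Q a 0 (-c) 0" using inv_Q[of a 0 c 0] Aq by simp
    have t1: "trace B' = 0 \<and> trace (A' ** B') = 0" unfolding Aq(1) Bq(1) Q_mult trace_Q0 by simp
    have t2: "\<exists>h\<in>SU2. cj h A' \<in> Spin2 \<and> cj h B' \<in> Spin2"
      if k: "trace (A' ** B' ** matrix_inv A' ** matrix_inv B') = 2"
    proof -
      have "(a*a - c*c)*(b*b+d*d) = 1" (is "?P = 1")
        using k Aq(2) Bq(2) unfolding Aq(1) Bq(1) iA iB Q_mult trace_Q2 by algebra
      then have "c^2 = 0" using Aq(2) Bq(2) by algebra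
      then have c0: "c = 0" by simp
      then have a2: "a^2 = 1" using Aq(2) by simp
      obtain h where h: "h \<in> SU2" "\<forall>a s. cj h (Q a (s*b) 0 (s*d)) = Q a 0 s 0" using hj[OF Bq(2)] by blast
      have "cj h B' = Q 0 0 1 0" using h(2)[rule_format, of 0 1] Bq(1) by simp
      moreover have "cj h A' = Q a 0 0 0" using h(2)[rule_format, of a 0] Aq(1) c0 by simp
      ultimately have "cj h A' \<in> Spin2" "cj h B' \<in> Spin2" using a2 by (simp_all add: Spin2_in)
      then show ?thesis using h(1) by blast
    qed
    show ?thesis using t1 t2 by blast
  next
    assume "A' \<in> Spin2_minus" "B' \<in> Spin2_minus"
    then obtain b1 d1 b2 d2 where Aq: "A' = Q 0 b1 0 d1" "b1^2+d1^2 = 1" and Bq: "B' = Q 0 b2 0 d2" "b2^2+d2^2=1"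
      unfolding Sm_Q by blast
    have iA: "matrix_inv (Q 0 b1 0 d1) = Q 0 (-b1) 0 (-d1)" using inv_Q[of 0 b1 0 d1] Aq by simp
    have iB: "matrix_inv (Q 0 b2 0 d2) = Q 0 (-b2) 0 (-d2)" using inv_Q[of 0 b2 0 d2] Bq by simp
    have t1: "trace A' = 0 \<and> trace B' = 0" unfolding Aq(1) Bq(1) trace_Q0 by simp
    have t2: "\<exists>h\<in>SU2. cj h A' \<in> Spin2 \<and> cj h B' \<in> Spin2"
      if k: "trace (A' ** B' ** matrix_inv A' ** matrix_inv B') = 2"
    proof -
      define s where "s = b1*b2 + d1*d2"
      define w where "w = d1*b2 - b1*d2"
      have "s * s - w*w = 1" (is "?P = 1")
        using k Aq(2) Bq(2) unfolding Aq(1) Bq(1) iA iB Q_mult trace_Q2 s_def w_def by algebra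
      moreover have "s * s + w*w = 1" unfolding s_def w_def using Aq(2) Bq(2) by algebra
      ultimately have "w^2 = 0" by algebra
      then have w0: "w = 0" by simp
      have s2: "s^2 = 1" using \<open>s * s + w*w = 1\<close> w0 by (simp add: power2_eq_square)
      have eb: "b2 = s * b1" "d2 = s * d1" using w0 Aq(2) unfolding s_def w_def by algebra+
      obtain h where h: "h \<in> SU2" "\<forall>a s. cj h (Q a (s*b1) 0 (s*d1)) = Q a 0 s 0" using hj[OF Aq(2)] by blast
      have "cj h A' = Q 0 0 1 0" using h(2)[rule_format, of 0 1] Aq(1) by simp
      moreover have "cj h B' = Q 0 0 s 0" using h(2)[rule_format, of 0 s] Bq(1) eb by simp
      ultimately have "cj h A' \<in> Spin2" "cj h B' \<in> Spin2" using s2 by (simp_all add: Spin2_in)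
      then show ?thesis using h(1) by blast
    qed
    show ?thesis using t1 t2 by blast
  qed
  then show "(trace A' = 0 \<and> trace B' = 0) \<or> (trace A' = 0 \<and> trace (A' ** B') = 0)
          \<or> (trace B' = 0 \<and> trace (A' ** B') = 0)"
    and "trace (A' ** B' ** matrix_inv A' ** matrix_inv B') = 2 \<Longrightarrow>
         \<exists>h\<in>SU2. cj h A' \<in> Spin2 \<and> cj h B' \<in> Spin2" by blast+
qed


theorem proposition3p3:
  fixes A B :: cmat2
  assumes "A \<in> SU2" and "B \<in> SU2"
  defines "x \<equiv> trace A" and "y \<equiv> trace B" and "z \<equiv> trace (A ** B)"
    and "k \<equiv> trace (A ** B ** matrix_inv A ** matrix_inv B)"
  shows "(is_G_class Pin2 A B \<and> \<not> is_G_class Spin2 A B) \<longleftrightarrow>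
         (k \<noteq> 2 \<and> ((x = 0 \<and> y = 0) \<or> (x = 0 \<and> z = 0) \<or> (y = 0 \<and> z = 0)))"
proof -
  note AB = assms(1,2)
  have rA: "A \<in> rep_image A B" and rB: "B \<in> rep_image A B" by (auto intro: rep_image.intros)
  have comm: "k = 2" if "A ** B = B ** A" unfolding k_def by (rule comm_k[OF AB that])
  have Spin_int: "is_G_class Spin2 A B" if g: "g \<in> SU2" "cj g A \<in> Spin2" "cj g B \<in> Spin2" for g
    by (rule class_intro[OF g(1) AB Spin2_closed(1) Spin2_closed(2) Spin2_closed(3) g(2,3)])
  have Pin_int: "is_G_class Pin2 A B" if g: "g \<in> SU2" "cj g A \<in> Pin2" "cj g B \<in> Pin2" for g
    by (rule class_intro[OF g(1) AB Pin2_closed(1) Pin2_closed(2) Pin2_closed(3) g(2,3)])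
  have cjk: "cj g (A ** B ** matrix_inv A ** matrix_inv B) =
      cj g A ** cj g B ** matrix_inv (cj g A) ** matrix_inv (cj g B)" if g: "g \<in> SU2" for g
    using cj_mult[OF g] cj_inv[OF g] AB by simp
  show ?thesis
  proof
    assume h: "is_G_class Pin2 A B \<and> \<not> is_G_class Spin2 A B"
    then obtain g where g: "g \<in> SU2" and gP: "\<forall>u\<in>rep_image A B. cj g u \<in> Pin2"
      unfolding is_G_class_def cj_def[symmetric] by blast
    have PA: "cj g A \<in> Pin2" and PB: "cj g B \<in> Pin2" using gP rA rB by auto
    have nb: "\<not> (cj g A \<in> Spin2 \<and> cj g B \<in> Spin2)" using Spin_int g h by blast
    have tx: "x = trace (cj g A)" and ty: "y = trace (cj g B)"
      and tz: "z = trace (cj g A ** cj g B)"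
      and tk: "k = trace (cj g A ** cj g B ** matrix_inv (cj g A) ** matrix_inv (cj g B))"
      unfolding x_def y_def z_def k_def using trace_cj[OF g] cj_mult[OF g] cjk[OF g] by metis+
    have k2: "k \<noteq> 2"
    proof
      assume "k = 2"
      then have "trace (cj g A ** cj g B ** matrix_inv (cj g A) ** matrix_inv (cj g B)) = 2"
        using tk by simp
      then obtain h' where h': "h' \<in> SU2" "cj h' (cj g A) \<in> Spin2" "cj h' (cj g B) \<in> Spin2"
        using pin_cases(2)[OF PA PB nb] by blast
      have "h' ** g \<in> SU2" using SU2_mult h'(1) g by blast
      moreover have "cj (h' ** g) A \<in> Spin2" "cj (h' ** g) B \<in> Spin2"
        using h' cj_comp[OF g h'(1)] by simp_all
      ultimately have "is_G_class Spin2 A B" using Spin_int by blast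
      then show False using h by blast
    qed
    show "k \<noteq> 2 \<and> ((x = 0 \<and> y = 0) \<or> (x = 0 \<and> z = 0) \<or> (y = 0 \<and> z = 0))"
      using k2 pin_cases(1)[OF PA PB nb] tx ty tz by simp
  next
    assume h: "k \<noteq> 2 \<and> ((x = 0 \<and> y = 0) \<or> (x = 0 \<and> z = 0) \<or> (y = 0 \<and> z = 0))"
    have nc: "A ** B \<noteq> B ** A" using comm h by blast
    have nS: "\<not> is_G_class Spin2 A B"
    proof
      assume "is_G_class Spin2 A B"
      then obtain g where g: "g \<in> SU2" and gS: "\<forall>u\<in>rep_image A B. cj g u \<in> Spin2"
        unfolding is_G_class_def cj_def[symmetric] by blast
      obtain a c where a: "cj g A = Q a 0 c 0" using gS rA unfolding Spin2_Q by blast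
      obtain a' c' where a': "cj g B = Q a' 0 c' 0" using gS rB unfolding Spin2_Q by blast
      have "cj g A ** cj g B = cj g B ** cj g A" unfolding a a' Q_mult Q_eq by (simp add: algebra_simps)
      then have "cj g (A ** B) = cj g (B ** A)" using cj_mult[OF g] by simp
      then have "A ** B = B ** A" using cj_cancel[OF g] by blast
      then show False using nc by blast
    qed
    have C: "A ** B \<in> SU2" using SU2_mult AB by blast
    have "is_G_class Pin2 A B"
    proof -
      consider "x = 0" "y = 0" | "x = 0" "z = 0" | "y = 0" "z = 0" using h by blast
      then show ?thesis
      proof cases
        case 1
        then obtain g where g: "g \<in> SU2" "cj g A \<in> Spin2_minus" "cj g B \<in> Spin2_minus"
          using rot_pair[OF AB(1) _ AB(2) _ nc] 1 unfolding x_def y_def by blast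
        then show ?thesis using Pin_int unfolding Pin2_def by blast
      next
        case 2
        have nc2: "A ** (A ** B) \<noteq> (A ** B) ** A"
        proof
          assume e: "A ** (A ** B) = (A ** B) ** A"
          have "A ** B = matrix_inv A ** (A ** (A ** B))"
            using SU2_inv(3)[OF AB(1)] by (simp add: matrix_mul_assoc)
          also have "\<dots> = B ** A" using e SU2_inv(3)[OF AB(1)] by (simp add: matrix_mul_assoc)
          finally show False using nc by blast
        qed
        obtain g where g: "g \<in> SU2" "cj g A \<in> Spin2_minus" "cj g (A ** B) \<in> Spin2_minus"
          using rot_pair[OF AB(1) _ C _ nc2] 2 unfolding x_def z_def by blast
        have "B = matrix_inv A ** (A ** B)"
          using SU2_inv(3)[OF AB(1)] by (simp add: matrix_mul_assoc)
        then have "cj g B = matrix_inv (cj g A) ** cj g (A ** B)"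
          using cj_mult[OF g(1)] cj_inv[OF g(1) AB(1)] by metis
        moreover have "cj g A \<in> Pin2" "cj g (A ** B) \<in> Pin2" using g unfolding Pin2_def by auto
        ultimately have "cj g B \<in> Pin2" using Pin2_closed by metis
        then show ?thesis using Pin_int g \<open>cj g A \<in> Pin2\<close> by blast
      next
        case 3
        have nc2: "B ** (A ** B) \<noteq> (A ** B) ** B"
        proof
          assume e: "B ** (A ** B) = (A ** B) ** B"
          have "B ** A = (B ** (A ** B)) ** matrix_inv B"
            using SU2_inv(2)[OF AB(2)] by (metis matrix_mul_assoc matrix_mul_rid)
          also have "\<dots> = ((A ** B) ** B) ** matrix_inv B" using e by simp
          also have "\<dots> = A ** B" using SU2_inv(2)[OF AB(2)] by (metis matrix_mul_assoc matrix_mul_rid)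
          finally show False using nc by metis
        qed
        obtain g where g: "g \<in> SU2" "cj g B \<in> Spin2_minus" "cj g (A ** B) \<in> Spin2_minus"
          using rot_pair[OF AB(2) _ C _ nc2] 3 unfolding y_def z_def by blast
        have "A = (A ** B) ** matrix_inv B"
          using SU2_inv(2)[OF AB(2)] by (metis matrix_mul_assoc matrix_mul_rid)
        then have "cj g A = cj g (A ** B) ** matrix_inv (cj g B)"
          using cj_mult[OF g(1)] cj_inv[OF g(1) AB(2)] by metis
        moreover have "cj g B \<in> Pin2" "cj g (A ** B) \<in> Pin2" using g unfolding Pin2_def by auto
        ultimately have "cj g A \<in> Pin2" using Pin2_closed by metis
        then show ?thesis using Pin_int g \<open>cj g B \<in> Pin2\<close> by blast
      qed
    qed
    then show "is_G_class Pin2 A B \<and> \<not> is_G_class Spin2 A B" using nS by blast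
  qed
qed

end
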